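(* Let $f$ be an almost distance function on a bi-complete connected Finsler manifold $M$ and let $p\in f^{-1}(\inf f,\sup f)$. Then there exist a neighborhood $V_p$ of $p$ and $\delta(p)>0$ such that, with $a_0:=f(p)-\tfrac12\delta(p)$ and $b_0:=f(p)+\tfrac12\delta(p)$, every $q\in V_p$ admits an $f$-geodesic $\gamma:[0,\delta(p)]\to M$ with either $\gamma(0)=q$ and $\gamma$ meeting ${}^{b_0}M_f$, or $\gamma(\delta(p))=q$ and $\gamma$ meeting $M_f^{a_0}$. In particular, for each $q\in V_p$, either $d(M_f^{a_0},q)=f(q)-a_0$ or $d(q,{}^{b_0}M_f)=b_0-f(q)$.
   Context: $(M,F)$ is a connected Finsler manifold with (possibly asymmetric) distance $d$; bi-complete means all forward Cauchy ($d(x_i,x_j)\to0$, $i<j$) and backward Cauchy ($d(x_j,x_i)\to0$, $i<j$) sequences converge. $f$ is 1-Lipschitz if $f(y)-f(x)\le d(x,y)$. An $f$-geodesic is a unit speed nonconstant geodesic $\gamma:I\to M$ with $f(\gamma(t))-f(\gamma(s))=t-s$. An almost distance function is a 1-Lipschitz $f$ such that for each $p\in f^{-1}(\inf f,\sup f)$ there are a neighborhood $U_p$ and $\delta(p)>0$ such that every $q\in U_p$ admits an $f$-geodesic $\gamma_q:[0,\delta(p)]\to M$ with $\gamma_q(0)=q$ or $\gamma_q(\delta(p))=q$. $M_f^a:=f^{-1}(-\infty,a]$, ${}^bM_f:=f^{-1}[b,\infty)$, $d(A,q):=\inf_{x\in A}d(x,q)$, $d(q,A):=\inf_{x\in A}d(q,x)$.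 *)

theory Defs
  imports "HOL-Analysis.Analysis"
begin

text \<open>Abstract (metric) model of a connected Finsler manifold with its
  possibly asymmetric distance d.\<close>

definition quasi_metric :: "('a \<Rightarrow> 'a \<Rightarrow> real) \<Rightarrow> bool" where
  "quasi_metric d \<longleftrightarrow>
     (\<forall>x y. 0 \<le> d x y) \<and> (\<forall>x. d x x = 0) \<and> (\<forall>x y. d x y = 0 \<longrightarrow> x = y) \<and>
     (\<forall>x y z. d x z \<le> d x y + d y z)"

text \<open>The manifold topology coincides with the topology of forward balls and
  with the topology of backward balls (as for every Finsler manifold).\<close>
definition finsler_topology :: "('a::topological_space \<Rightarrow> 'a \<Rightarrow> real) \<Rightarrow> bool" where
  "finsler_topology d \<longleftrightarrow>
     (\<forall>S. open S \<longleftrightarrow> (\<forall>x\<in>S. \<exists>e>0. \<forall>y. d x y < e \<longrightarrow> y \<in> S)) \<and>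
     (\<forall>S. open S \<longleftrightarrow> (\<forall>x\<in>S. \<exists>e>0. \<forall>y. d y x < e \<longrightarrow> y \<in> S))"

definition forward_cauchy :: "('a \<Rightarrow> 'a \<Rightarrow> real) \<Rightarrow> (nat \<Rightarrow> 'a) \<Rightarrow> bool" where
  "forward_cauchy d x \<longleftrightarrow> (\<forall>e>0. \<exists>N. \<forall>i j. N \<le> i \<longrightarrow> i < j \<longrightarrow> d (x i) (x j) < e)"

definition backward_cauchy :: "('a \<Rightarrow> 'a \<Rightarrow> real) \<Rightarrow> (nat \<Rightarrow> 'a) \<Rightarrow> bool" where
  "backward_cauchy d x \<longleftrightarrow> (\<forall>e>0. \<exists>N. \<forall>i j. N \<le> i \<longrightarrow> i < j \<longrightarrow> d (x j) (x i) < e)"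

definition bi_complete :: "('a::topological_space \<Rightarrow> 'a \<Rightarrow> real) \<Rightarrow> bool" where
  "bi_complete d \<longleftrightarrow>
     (\<forall>x. forward_cauchy d x \<longrightarrow> (\<exists>y. x \<longlonglongrightarrow> y)) \<and>
     (\<forall>x. backward_cauchy d x \<longrightarrow> (\<exists>y. x \<longlonglongrightarrow> y))"

definition finsler_space :: "('a::topological_space \<Rightarrow> 'a \<Rightarrow> real) \<Rightarrow> bool" where
  "finsler_space d \<longleftrightarrow> quasi_metric d \<and> finsler_topology d \<and> connected (UNIV :: 'a set)"

definition lipschitz1 :: "('a \<Rightarrow> 'a \<Rightarrow> real) \<Rightarrow> ('a \<Rightarrow> real) \<Rightarrow> bool" where
  "lipschitz1 d f \<longleftrightarrow> (\<forall>x y. f y - f x \<le> d x y)"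

definition unit_speed_geodesic ::
    "('a::topological_space \<Rightarrow> 'a \<Rightarrow> real) \<Rightarrow> (real \<Rightarrow> 'a) \<Rightarrow> real set \<Rightarrow> bool" where
  "unit_speed_geodesic d \<gamma> I \<longleftrightarrow>
     is_interval I \<and> (\<exists>s\<in>I. \<exists>t\<in>I. s < t) \<and> continuous_on I \<gamma> \<and>
     (\<forall>t\<in>I. \<exists>e>0. \<forall>s\<in>I. \<forall>u\<in>I. t - e \<le> s \<longrightarrow> s \<le> u \<longrightarrow> u \<le> t + e \<longrightarrow>
        d (\<gamma> s) (\<gamma> u) = u - s)"

definition f_geodesic ::
    "('a::topological_space \<Rightarrow> 'a \<Rightarrow> real) \<Rightarrow> ('a \<Rightarrow> real) \<Rightarrow> (real \<Rightarrow> 'a) \<Rightarrow> real set \<Rightarrow> bool" where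
  "f_geodesic d f \<gamma> I \<longleftrightarrow>
     unit_speed_geodesic d \<gamma> I \<and> (\<forall>s\<in>I. \<forall>t\<in>I. f (\<gamma> t) - f (\<gamma> s) = t - s)"

definition nbhd :: "'a::topological_space set \<Rightarrow> 'a \<Rightarrow> bool" where
  "nbhd V p \<longleftrightarrow> (\<exists>U. open U \<and> p \<in> U \<and> U \<subseteq> V)"

definition in_open_range :: "('a \<Rightarrow> real) \<Rightarrow> 'a \<Rightarrow> bool" where
  "in_open_range f p \<longleftrightarrow> (\<exists>x. f x < f p) \<and> (\<exists>x. f p < f x)"

definition almost_distance_function ::
    "('a::topological_space \<Rightarrow> 'a \<Rightarrow> real) \<Rightarrow> ('a \<Rightarrow> real) \<Rightarrow> bool" where
  "almost_distance_function d f \<longleftrightarrow> lipschitz1 d f \<and>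
     (\<forall>p. in_open_range f p \<longrightarrow> (\<exists>U \<delta>. nbhd U p \<and> \<delta> > 0 \<and>
        (\<forall>q\<in>U. \<exists>\<gamma>. f_geodesic d f \<gamma> {0..\<delta>} \<and> (\<gamma> 0 = q \<or> \<gamma> \<delta> = q))))"

definition sublevel :: "('a \<Rightarrow> real) \<Rightarrow> real \<Rightarrow> 'a set" where
  "sublevel f a = {x. f x \<le> a}"

definition superlevel :: "('a \<Rightarrow> real) \<Rightarrow> real \<Rightarrow> 'a set" where
  "superlevel f b = {x. b \<le> f x}"

definition set_dist_to :: "('a \<Rightarrow> 'a \<Rightarrow> real) \<Rightarrow> 'a set \<Rightarrow> 'a \<Rightarrow> real" where
  "set_dist_to d A q = (INF x\<in>A. d x q)"

definition dist_to_set :: "('a \<Rightarrow> 'a \<Rightarrow> real) \<Rightarrow> 'a \<Rightarrow> 'a set \<Rightarrow> real" where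
  "dist_to_set d q A = (INF x\<in>A. d q x)"

end

theory Submission
  imports Defs
begin

lemma geo_le:
  assumes "unit_speed_geodesic d \<gamma> {0..\<delta>}" "quasi_metric d"
    and "0 \<le> a" "a \<le> b" "b \<le> \<delta>"
  shows "d (\<gamma> a) (\<gamma> b) \<le> b - a"
proof -
  have tri: "\<And>x y z. d x z \<le> d x y + d y z" using assms(2) unfolding quasi_metric_def by blast
  have loc: "\<forall>t\<in>{0..\<delta>}. \<exists>e>0. \<forall>s\<in>{0..\<delta>}. \<forall>u\<in>{0..\<delta>}. t - e \<le> s \<longrightarrow> s \<le> u \<longrightarrow> u \<le> t + e \<longrightarrow>
        d (\<gamma> s) (\<gamma> u) = u - s"
    using assms(1) unfolding unit_speed_geodesic_def by blast
  have "0 \<le> a \<longrightarrow> b \<le> b \<longrightarrow> d (\<gamma> a) (\<gamma> b) \<le> b - a"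
  proof (rule Bolzano[where P="\<lambda>x y. 0 \<le> x \<longrightarrow> y \<le> b \<longrightarrow> d (\<gamma> x) (\<gamma> y) \<le> y - x", OF assms(4)])
    fix x y z :: real
    assume h: "0 \<le> x \<longrightarrow> y \<le> b \<longrightarrow> d (\<gamma> x) (\<gamma> y) \<le> y - x"
      "0 \<le> y \<longrightarrow> z \<le> b \<longrightarrow> d (\<gamma> y) (\<gamma> z) \<le> z - y" "x \<le> y" "y \<le> z"
    show "0 \<le> x \<longrightarrow> z \<le> b \<longrightarrow> d (\<gamma> x) (\<gamma> z) \<le> z - x"
      using h tri[of "\<gamma> x" "\<gamma> z" "\<gamma> y"] by force
  next
    fix x assume x: "a \<le> x" "x \<le> b"
    then have "x \<in> {0..\<delta>}" using assms by auto
    then obtain e where e: "e > 0" "\<forall>s\<in>{0..\<delta>}. \<forall>u\<in>{0..\<delta>}. x - e \<le> s \<longrightarrow> s \<le> u \<longrightarrow> u \<le> x + e \<longrightarrow>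
        d (\<gamma> s) (\<gamma> u) = u - s" using loc by blast
    show "\<exists>da>0. \<forall>s u. s \<le> x \<and> x \<le> u \<and> u - s < da \<longrightarrow> (0 \<le> s \<longrightarrow> u \<le> b \<longrightarrow> d (\<gamma> s) (\<gamma> u) \<le> u - s)"
    proof (intro exI[of _ e] conjI allI impI)
      fix s u assume "s \<le> x \<and> x \<le> u \<and> u - s < e" "0 \<le> s" "u \<le> b"
      then show "d (\<gamma> s) (\<gamma> u) \<le> u - s" using e assms by auto
    qed (use e in auto)
  qed
  then show ?thesis using assms by simp
qed

lemma inf_eq:
  fixes g :: "'a \<Rightarrow> real"
  assumes "\<And>x. x \<in> A \<Longrightarrow> c \<le> g x" "z \<in> A" "g z \<le> c"
  shows "(INF x\<in>A. g x) = c"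
proof (rule antisym)
  have "bdd_below (g ` A)" using assms(1) by (meson bdd_belowI2)
  then have "(INF x\<in>A. g x) \<le> g z" using assms(2) by (rule cINF_lower)
  then show "(INF x\<in>A. g x) \<le> c" using assms(3) by simp
  show "c \<le> (INF x\<in>A. g x)" using assms(1,2) by (intro cINF_greatest) auto
qed

theorem lemma5:
  fixes d :: "'a::topological_space \<Rightarrow> 'a \<Rightarrow> real" and f :: "'a \<Rightarrow> real" and p :: 'a
  assumes "finsler_space d" and "bi_complete d"
    and "almost_distance_function d f"
    and "in_open_range f p"
  shows "\<exists>V \<delta>. nbhd V p \<and> \<delta> > 0 \<and>
    (let a0 = f p - \<delta> / 2; b0 = f p + \<delta> / 2 in
      (\<forall>q\<in>V. \<exists>\<gamma>. f_geodesic d f \<gamma> {0..\<delta>} \<and>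
         ((\<gamma> 0 = q \<and> (\<exists>t\<in>{0..\<delta>}. \<gamma> t \<in> superlevel f b0)) \<or>
          (\<gamma> \<delta> = q \<and> (\<exists>t\<in>{0..\<delta>}. \<gamma> t \<in> sublevel f a0)))) \<and>
      (\<forall>q\<in>V. set_dist_to d (sublevel f a0) q = f q - a0 \<or>
              dist_to_set d q (superlevel f b0) = b0 - f q))"
proof -
  have qm: "quasi_metric d" and ft: "finsler_topology d" using assms(1) unfolding finsler_space_def by auto
  have lip: "\<And>x y. f y - f x \<le> d x y" using assms(3) unfolding almost_distance_function_def lipschitz1_def by auto
  obtain U \<delta> where U: "nbhd U p" "\<delta> > 0"
    "\<forall>q\<in>U. \<exists>\<gamma>. f_geodesic d f \<gamma> {0..\<delta>} \<and> (\<gamma> 0 = q \<or> \<gamma> \<delta> = q)"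
    using assms(3,4) unfolding almost_distance_function_def by blast
  obtain W where W: "open W" "p \<in> W" "W \<subseteq> U" using U(1) unfolding nbhd_def by blast
  define a0 where "a0 = f p - \<delta> / 2"
  define b0 where "b0 = f p + \<delta> / 2"
  have opL: "open {x. f x < c}" for c
  proof -
    have "\<forall>x\<in>{x. f x < c}. \<exists>e>0. \<forall>y. d x y < e \<longrightarrow> y \<in> {x. f x < c}"
    proof
      fix x assume "x \<in> {x. f x < c}"
      then show "\<exists>e>0. \<forall>y. d x y < e \<longrightarrow> y \<in> {x. f x < c}"
        using lip by (intro exI[of _ "c - f x"]) (auto, smt (verit) lip)
    qed
    then show ?thesis using ft unfolding finsler_topology_def by blast
  qed
  have opG: "open {x. c < f x}" for c
  proof -
    have "\<forall>x\<in>{x. c < f x}. \<exists>e>0. \<forall>y. d y x < e \<longrightarrow> y \<in> {x. c < f x}"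
    proof
      fix x assume "x \<in> {x. c < f x}"
      then show "\<exists>e>0. \<forall>y. d y x < e \<longrightarrow> y \<in> {x. c < f x}"
        using lip by (intro exI[of _ "f x - c"]) (auto, smt (verit) lip)
    qed
    then show ?thesis using ft unfolding finsler_topology_def by blast
  qed
  define V where "V = W \<inter> {x. f x < b0} \<inter> {x. a0 < f x}"
  have nV: "nbhd V p" unfolding nbhd_def V_def
    by (intro exI[of _ "W \<inter> {x. f x < b0} \<inter> {x. a0 < f x}"])
       (use W opL opG U(2) in \<open>auto simp: a0_def b0_def\<close>)
  have main: "\<exists>\<gamma>. f_geodesic d f \<gamma> {0..\<delta>} \<and>
         ((\<gamma> 0 = q \<and> (\<exists>t\<in>{0..\<delta>}. \<gamma> t \<in> superlevel f b0)) \<or>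
          (\<gamma> \<delta> = q \<and> (\<exists>t\<in>{0..\<delta>}. \<gamma> t \<in> sublevel f a0)))
      \<and> (set_dist_to d (sublevel f a0) q = f q - a0 \<or>
              dist_to_set d q (superlevel f b0) = b0 - f q)" if q: "q \<in> V" for q
  proof -
    have qf: "a0 < f q" "f q < b0" "q \<in> U" using q W unfolding V_def by auto
    obtain \<gamma> where g: "f_geodesic d f \<gamma> {0..\<delta>}" "\<gamma> 0 = q \<or> \<gamma> \<delta> = q" using U(3) qf(3) by blast
    have us: "unit_speed_geodesic d \<gamma> {0..\<delta>}" and fe: "\<forall>s\<in>{0..\<delta>}. \<forall>t\<in>{0..\<delta>}. f (\<gamma> t) - f (\<gamma> s) = t - s"
      using g(1) unfolding f_geodesic_def by blast+
    from g(2) show ?thesis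
    proof
      assume g0: "\<gamma> 0 = q"
      define t where "t = b0 - f q"
      have t: "t \<in> {0..\<delta>}" using qf unfolding t_def a0_def b0_def by auto
      have "f (\<gamma> t) - f (\<gamma> 0) = t - 0" using fe t U(2) by auto
      then have ft: "f (\<gamma> t) = b0" using g0 unfolding t_def by simp
      have "dist_to_set d q (superlevel f b0) = b0 - f q"
        unfolding dist_to_set_def
      proof (rule inf_eq[where z = "\<gamma> t"])
        fix x assume "x \<in> superlevel f b0"
        then show "b0 - f q \<le> d q x" using lip[of x q] lip[of q x] unfolding superlevel_def by auto
      next
        show "\<gamma> t \<in> superlevel f b0" using ft unfolding superlevel_def by auto
        show "d q (\<gamma> t) \<le> b0 - f q" using geo_le[OF us qm, of 0 t] t g0 unfolding t_def by auto
      qed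
      moreover have "\<gamma> t \<in> superlevel f b0" using ft unfolding superlevel_def by simp
      ultimately have A: "\<exists>t\<in>{0..\<delta>}. \<gamma> t \<in> superlevel f b0" and D: "dist_to_set d q (superlevel f b0) = b0 - f q" using t by blast+
      show ?thesis
        apply (rule exI[of _ \<gamma>])
        using g(1) g0 A D by simp_all
    next
      assume g0: "\<gamma> \<delta> = q"
      define t where "t = \<delta> - (f q - a0)"
      have t: "t \<in> {0..\<delta>}" using qf unfolding t_def a0_def b0_def by auto
      have "f (\<gamma> \<delta>) - f (\<gamma> t) = \<delta> - t" using fe t U(2) by auto
      then have ft: "f (\<gamma> t) = a0" using g0 unfolding t_def by simp
      have "set_dist_to d (sublevel f a0) q = f q - a0"
        unfolding set_dist_to_def
      proof (rule inf_eq[where z = "\<gamma> t"])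
        fix x assume "x \<in> sublevel f a0"
        then show "f q - a0 \<le> d x q" using lip[of x q] lip[of q x] unfolding sublevel_def by auto
      next
        show "\<gamma> t \<in> sublevel f a0" using ft unfolding sublevel_def by auto
        show "d (\<gamma> t) q \<le> f q - a0" using geo_le[OF us qm, of t \<delta>] t g0 unfolding t_def by auto
      qed
      moreover have "\<gamma> t \<in> sublevel f a0" using ft unfolding sublevel_def by simp
      ultimately have A: "\<exists>t\<in>{0..\<delta>}. \<gamma> t \<in> sublevel f a0" and D: "set_dist_to d (sublevel f a0) q = f q - a0" using t by blast+
      show ?thesis
        apply (rule exI[of _ \<gamma>])
        using g(1) g0 A D by simp_all
    qed
  qed
  have m1: "\<forall>q\<in>V. \<exists>\<gamma>. f_geodesic d f \<gamma> {0..\<delta>} \<and>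
         ((\<gamma> 0 = q \<and> (\<exists>t\<in>{0..\<delta>}. \<gamma> t \<in> superlevel f b0)) \<or>
          (\<gamma> \<delta> = q \<and> (\<exists>t\<in>{0..\<delta>}. \<gamma> t \<in> sublevel f a0)))"
  proof
    fix q assume "q \<in> V"
    from main[OF this] obtain \<gamma> where "f_geodesic d f \<gamma> {0..\<delta>} \<and>
         ((\<gamma> 0 = q \<and> (\<exists>t\<in>{0..\<delta>}. \<gamma> t \<in> superlevel f b0)) \<or>
          (\<gamma> \<delta> = q \<and> (\<exists>t\<in>{0..\<delta>}. \<gamma> t \<in> sublevel f a0)))" by blast
    then show "\<exists>\<gamma>. f_geodesic d f \<gamma> {0..\<delta>} \<and>
         ((\<gamma> 0 = q \<and> (\<exists>t\<in>{0..\<delta>}. \<gamma> t \<in> superlevel f b0)) \<or>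
          (\<gamma> \<delta> = q \<and> (\<exists>t\<in>{0..\<delta>}. \<gamma> t \<in> sublevel f a0)))" by blast
  qed
  have m2: "\<forall>q\<in>V. set_dist_to d (sublevel f a0) q = f q - a0 \<or>
              dist_to_set d q (superlevel f b0) = b0 - f q"
  proof
    fix q assume "q \<in> V"
    from main[OF this] show "set_dist_to d (sublevel f a0) q = f q - a0 \<or>
              dist_to_set d q (superlevel f b0) = b0 - f q" by (elim exE conjE)
  qed
  show ?thesis unfolding Let_def
    apply (intro exI[of _ V] exI[of _ \<delta>] conjI nV U(2))
     apply (rule m1[unfolded a0_def b0_def])
    apply (rule m2[unfolded a0_def b0_def])
    done
qed

end
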